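(* Let $T$ be a tree rooted at $r$ with vertex set $V$. Let $V_1,V_2\subseteq V$ with $V_1\cap V_2=\emptyset$ and $|V_1|=|V_2|$, such that $V_1$ (resp. $V_2$) induces in $T$ a collection $\mathcal{P}_1$ (resp. $\mathcal{P}_2$) of vertex-disjoint paths, and suppose there is a bijection $\mathcal{P}_1\to\mathcal{P}_2$ mapping each path that starts at a vertex $v$ to a path of the same length that starts at a sibling of $v$. If every two distinct paths in $\mathcal{P}_1\cup\mathcal{P}_2$ are independent, then $V_1$ and $V_2$ are homometric sets of $T$.
   Context: Here a path in $\mathcal{P}_1\cup\mathcal{P}_2$ "starts at" the vertex of the path closest to the root (each such path runs downward from that vertex toward the leaves), and siblings are distinct vertices with the same parent. Two paths $P_1,P_2$ in $T$ are independent if there is no root-to-leaf path in $T$ that shares a vertex with both $P_1$ and $P_2$. The profile of a vertex set $V'$ is the multiset of distances in $T$ over all unordered pairs of distinct vertices of $V'$; two disjoint vertex sets are homometric if their profiles are equal. *)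

theory Defs
  imports Main "HOL-Library.Multiset"
begin

definition rooted_tree :: "'a set \<Rightarrow> 'a \<Rightarrow> ('a \<Rightarrow> 'a) \<Rightarrow> bool" where
  "rooted_tree V r par \<longleftrightarrow> finite V \<and> r \<in> V \<and>
     (\<forall>v\<in>V - {r}. par v \<in> V) \<and> (\<forall>v\<in>V. \<exists>n. (par ^^ n) v = r)"

definition tree_edge :: "'a set \<Rightarrow> 'a \<Rightarrow> ('a \<Rightarrow> 'a) \<Rightarrow> 'a \<Rightarrow> 'a \<Rightarrow> bool" where
  "tree_edge V r par u v \<longleftrightarrow> u \<in> V \<and> v \<in> V \<and>
     ((u \<noteq> r \<and> par u = v) \<or> (v \<noteq> r \<and> par v = u))"

definition is_walk :: "'a set \<Rightarrow> 'a \<Rightarrow> ('a \<Rightarrow> 'a) \<Rightarrow> 'a list \<Rightarrow> bool" where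
  "is_walk V r par xs \<longleftrightarrow> xs \<noteq> [] \<and> set xs \<subseteq> V \<and>
     (\<forall>i. Suc i < length xs \<longrightarrow> tree_edge V r par (xs ! i) (xs ! Suc i))"

definition tdist :: "'a set \<Rightarrow> 'a \<Rightarrow> ('a \<Rightarrow> 'a) \<Rightarrow> 'a \<Rightarrow> 'a \<Rightarrow> nat" where
  "tdist V r par u v = (LEAST k. \<exists>xs. is_walk V r par xs \<and> hd xs = u \<and> last xs = v
                                        \<and> length xs = Suc k)"

definition pair_dist :: "'a set \<Rightarrow> 'a \<Rightarrow> ('a \<Rightarrow> 'a) \<Rightarrow> 'a set \<Rightarrow> nat" where
  "pair_dist V r par e = (THE d. \<exists>u v. e = {u, v} \<and> u \<noteq> v \<and> d = tdist V r par u v)"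

definition profile :: "'a set \<Rightarrow> 'a \<Rightarrow> ('a \<Rightarrow> 'a) \<Rightarrow> 'a set \<Rightarrow> nat multiset" where
  "profile V r par S = image_mset (pair_dist V r par) (mset_set {e. e \<subseteq> S \<and> card e = 2})"

definition homometric :: "'a set \<Rightarrow> 'a \<Rightarrow> ('a \<Rightarrow> 'a) \<Rightarrow> 'a set \<Rightarrow> 'a set \<Rightarrow> bool" where
  "homometric V r par S1 S2 \<longleftrightarrow> S1 \<inter> S2 = {} \<and> profile V r par S1 = profile V r par S2"

definition down_path :: "'a set \<Rightarrow> 'a \<Rightarrow> ('a \<Rightarrow> 'a) \<Rightarrow> 'a list \<Rightarrow> bool" where
  "down_path V r par xs \<longleftrightarrow> xs \<noteq> [] \<and> set xs \<subseteq> V \<and> distinct xs \<and>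
     (\<forall>i. Suc i < length xs \<longrightarrow> xs ! Suc i \<noteq> r \<and> par (xs ! Suc i) = xs ! i)"

definition is_leaf :: "'a set \<Rightarrow> 'a \<Rightarrow> ('a \<Rightarrow> 'a) \<Rightarrow> 'a \<Rightarrow> bool" where
  "is_leaf V r par v \<longleftrightarrow> v \<in> V \<and> \<not> (\<exists>w\<in>V. w \<noteq> r \<and> par w = v)"

definition root_leaf_path :: "'a set \<Rightarrow> 'a \<Rightarrow> ('a \<Rightarrow> 'a) \<Rightarrow> 'a list \<Rightarrow> bool" where
  "root_leaf_path V r par xs \<longleftrightarrow> down_path V r par xs \<and> hd xs = r \<and> is_leaf V r par (last xs)"

definition independent :: "'a set \<Rightarrow> 'a \<Rightarrow> ('a \<Rightarrow> 'a) \<Rightarrow> 'a list \<Rightarrow> 'a list \<Rightarrow> bool" where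
  "independent V r par p q \<longleftrightarrow>
     \<not> (\<exists>\<rho>. root_leaf_path V r par \<rho> \<and> set \<rho> \<inter> set p \<noteq> {} \<and> set \<rho> \<inter> set q \<noteq> {})"

text \<open>S induces in T the collection P of vertex-disjoint (downward) paths:
P is exactly the set of connected components of T[S], each being a path.\<close>
definition induces_paths :: "'a set \<Rightarrow> 'a \<Rightarrow> ('a \<Rightarrow> 'a) \<Rightarrow> 'a set \<Rightarrow> 'a list set \<Rightarrow> bool" where
  "induces_paths V r par S P \<longleftrightarrow>
     (\<forall>p\<in>P. down_path V r par p) \<and> \<Union>(set ` P) = S \<and>
     (\<forall>p\<in>P. \<forall>q\<in>P. p \<noteq> q \<longrightarrow> set p \<inter> set q = {}) \<and>
     (\<forall>p\<in>P. \<forall>q\<in>P. p \<noteq> q \<longrightarrow> (\<forall>u\<in>set p. \<forall>v\<in>set q. \<not> tree_edge V r par u v))"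

definition siblings :: "'a set \<Rightarrow> 'a \<Rightarrow> ('a \<Rightarrow> 'a) \<Rightarrow> 'a \<Rightarrow> 'a \<Rightarrow> bool" where
  "siblings V r par u v \<longleftrightarrow> u \<in> V \<and> v \<in> V \<and> u \<noteq> v \<and> u \<noteq> r \<and> v \<noteq> r \<and> par u = par v"

end

theory Submission
  imports Defs
begin


inductive below :: "'a set \<Rightarrow> 'a \<Rightarrow> ('a \<Rightarrow> 'a) \<Rightarrow> 'a \<Rightarrow> 'a \<Rightarrow> bool"
  for V r par where
  brefl: "x \<in> V \<Longrightarrow> below V r par x x"
| bstep: "below V r par x (par v) \<Longrightarrow> v \<noteq> r \<Longrightarrow> v \<in> V \<Longrightarrow> below V r par x v"

definition Wk :: "'a set \<Rightarrow> 'a \<Rightarrow> ('a \<Rightarrow> 'a) \<Rightarrow> 'a \<Rightarrow> 'a \<Rightarrow> nat \<Rightarrow> bool" where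
  "Wk V r par x y k \<longleftrightarrow> (\<exists>xs. is_walk V r par xs \<and> hd xs = x \<and> last xs = y \<and> length xs = Suc k)"

lemma tdist_Wk: "tdist V r par x y = (LEAST k. Wk V r par x y k)"
  unfolding tdist_def Wk_def by simp

lemma walk_single[simp]: "is_walk V r par [a] \<longleftrightarrow> a \<in> V"
  by (simp add: is_walk_def)

lemma walk_Cons2: "is_walk V r par (a # b # xs) \<longleftrightarrow> tree_edge V r par a b \<and> is_walk V r par (b # xs)"
proof
  assume h: "is_walk V r par (a # b # xs)"
  then have H: "\<And>i. Suc i < length (a # b # xs) \<Longrightarrow> tree_edge V r par ((a # b # xs) ! i) ((a # b # xs) ! Suc i)"
    and S: "set (a # b # xs) \<subseteq> V" unfolding is_walk_def by blast+
  have "tree_edge V r par a b" using H[of 0] by simp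
  moreover have "is_walk V r par (b # xs)" unfolding is_walk_def
  proof (intro conjI allI impI)
    show "set (b # xs) \<subseteq> V" using S by simp
    fix i assume "Suc i < length (b # xs)"
    then show "tree_edge V r par ((b # xs) ! i) ((b # xs) ! Suc i)" using H[of "Suc i"] by simp
  qed simp
  ultimately show "tree_edge V r par a b \<and> is_walk V r par (b # xs)" by blast
next
  assume h: "tree_edge V r par a b \<and> is_walk V r par (b # xs)"
  then have H: "\<And>i. Suc i < length (b # xs) \<Longrightarrow> tree_edge V r par ((b # xs) ! i) ((b # xs) ! Suc i)"
    and S: "set (b # xs) \<subseteq> V" and e: "tree_edge V r par a b" unfolding is_walk_def by blast+
  show "is_walk V r par (a # b # xs)" unfolding is_walk_def
  proof (intro conjI allI impI)
    show "set (a # b # xs) \<subseteq> V" using S e unfolding tree_edge_def by simp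
    fix i assume i: "Suc i < length (a # b # xs)"
    show "tree_edge V r par ((a # b # xs) ! i) ((a # b # xs) ! Suc i)"
    proof (cases i)
      case 0 then show ?thesis using e by simp
    next
      case (Suc j) then show ?thesis using H[of j] i by simp
    qed
  qed simp
qed

lemma walk_append: "is_walk V r par xs \<Longrightarrow> is_walk V r par ys \<Longrightarrow> last xs = hd ys
  \<Longrightarrow> is_walk V r par (xs @ tl ys)"
proof (induction xs)
  case Nil then show ?case by (simp add: is_walk_def)
next
  case (Cons a xs)
  show ?case
  proof (cases xs)
    case Nil
    then show ?thesis using Cons by (cases ys) (auto simp: is_walk_def)
  next
    case (Cons b zs)
    then show ?thesis using Cons.prems Cons.IH by (auto simp: walk_Cons2)
  qed
qed

lemma tree_edge_sym: "tree_edge V r par a b \<longleftrightarrow> tree_edge V r par b a"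
  unfolding tree_edge_def by auto

lemma walk_rev: "is_walk V r par xs \<Longrightarrow> is_walk V r par (rev xs)"
proof (induction xs)
  case Nil then show ?case by simp
next
  case (Cons a xs)
  show ?case
  proof (cases xs)
    case Nil
    then show ?thesis using Cons by simp
  next
    case (Cons b zs)
    then have e: "tree_edge V r par a b" and w: "is_walk V r par xs" using Cons.prems by (auto simp: walk_Cons2)
    have w2: "is_walk V r par [b, a]" using e by (auto simp: walk_Cons2 tree_edge_sym tree_edge_def)
    have "is_walk V r par (rev xs @ tl [b, a])"
      by (rule walk_append[OF Cons.IH[OF w] w2]) (simp add: Cons last_rev)
    then show ?thesis by simp
  qed
qed

lemma walk_nonempty: "is_walk V r par xs \<Longrightarrow> xs \<noteq> []"
  by (simp add: is_walk_def)

lemma Wk_sym: "Wk V r par x y k \<longleftrightarrow> Wk V r par y x k"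
  unfolding Wk_def
  by (metis walk_rev walk_nonempty hd_rev last_rev length_rev rev_rev_ident)

lemma tdist_sym: "tdist V r par x y = tdist V r par y x"
proof -
  have "Wk V r par x y = Wk V r par y x" by (rule ext) (simp add: Wk_sym)
  then show ?thesis unfolding tdist_Wk by simp
qed

lemma tdist_refl: "x \<in> V \<Longrightarrow> tdist V r par x x = 0"
  unfolding tdist_Wk Wk_def
  by (rule Least_eq_0) (rule exI[of _ "[x]"], simp)

lemma down_path_walk: "down_path V r par xs \<Longrightarrow> is_walk V r par xs"
proof -
  assume d: "down_path V r par xs"
  then have S: "set xs \<subseteq> V" and ne: "xs \<noteq> []"
    and H: "\<And>i. Suc i < length xs \<Longrightarrow> xs ! Suc i \<noteq> r \<and> par (xs ! Suc i) = xs ! i"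
    unfolding down_path_def by blast+
  show ?thesis unfolding is_walk_def
  proof (intro conjI allI impI ne S)
    fix i assume i: "Suc i < length xs"
    have "xs ! i \<in> V" "xs ! Suc i \<in> V" using S i nth_mem[of i xs] nth_mem[of "Suc i" xs] by auto
    then show "tree_edge V r par (xs ! i) (xs ! Suc i)" using H[OF i] unfolding tree_edge_def by simp
  qed
qed



definition depth :: "'a \<Rightarrow> ('a \<Rightarrow> 'a) \<Rightarrow> 'a \<Rightarrow> nat" where
  "depth r par v = (LEAST n. (par ^^ n) v = r)"

locale rt =
  fixes V :: "'a set" and r :: 'a and par :: "'a \<Rightarrow> 'a"
  assumes tree: "rooted_tree V r par"
begin

lemma finV: "finite V" and rV: "r \<in> V" and parV: "\<And>v. v \<in> V \<Longrightarrow> v \<noteq> r \<Longrightarrow> par v \<in> V"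
  and reach: "\<And>v. v \<in> V \<Longrightarrow> \<exists>n. (par ^^ n) v = r"
  using tree unfolding rooted_tree_def by auto

lemma depth_reach: "v \<in> V \<Longrightarrow> (par ^^ depth r par v) v = r"
proof -
  assume "v \<in> V"
  then obtain n where "(par ^^ n) v = r" using reach by blast
  then show ?thesis unfolding depth_def by (rule LeastI)
qed

lemma depth_min: "k < depth r par v \<Longrightarrow> (par ^^ k) v \<noteq> r"
  unfolding depth_def using not_less_Least by blast

lemma depth_le: "(par ^^ k) v = r \<Longrightarrow> depth r par v \<le> k"
  unfolding depth_def by (rule Least_le)

lemma depth_par: assumes "v \<in> V" "v \<noteq> r" shows "depth r par v = Suc (depth r par (par v))"
proof -
  let ?n = "depth r par v"
  have n: "(par ^^ ?n) v = r" using depth_reach assms by simp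
  have "?n \<noteq> 0" using n assms by (metis funpow_0)
  then obtain m where m: "?n = Suc m" by (cases ?n) auto
  have "(par ^^ m) (par v) = r" using n m by (simp add: funpow_Suc_right del: funpow.simps)
  then have a: "depth r par (par v) \<le> m" by (rule depth_le)
  have "(par ^^ Suc (depth r par (par v))) v = r"
    using depth_reach[of "par v"] parV[OF assms] by (simp add: funpow_Suc_right del: funpow.simps)
  then have "?n \<le> Suc (depth r par (par v))" by (rule depth_le)
  then show ?thesis using a m by simp
qed

lemma depth_r: "depth r par r = 0"
  using depth_le[of 0 r] by simp

lemma below_V: "below V r par x v \<Longrightarrow> x \<in> V \<and> v \<in> V"
  by (induction rule: below.induct) auto

lemma below_depth: "below V r par x v \<Longrightarrow> v = x \<or> depth r par x < depth r par v"
proof (induction rule: below.induct)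
  case (brefl x) then show ?case by simp
next
  case (bstep x v)
  then show ?case using depth_par[of v] by auto
qed

lemma below_chain: "below V r par x v \<Longrightarrow> \<exists>m. (par ^^ m) v = x \<and> (\<forall>k<m. (par ^^ k) v \<noteq> r)"
proof (induction rule: below.induct)
  case (brefl x) then show ?case by (intro exI[of _ 0]) simp
next
  case (bstep x v)
  then obtain m where m: "(par ^^ m) (par v) = x" "\<forall>k<m. (par ^^ k) (par v) \<noteq> r" by blast
  show ?case
  proof (intro exI[of _ "Suc m"] conjI allI impI)
    show "(par ^^ Suc m) v = x" using m by (simp add: funpow_Suc_right del: funpow.simps)
    fix k assume k: "k < Suc m"
    show "(par ^^ k) v \<noteq> r"
    proof (cases k)
      case 0 then show ?thesis using bstep by simp
    next
      case (Suc j) then show ?thesis using m k by (simp add: funpow_Suc_right del: funpow.simps)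
    qed
  qed
qed

lemma funpow_V: "v \<in> V \<Longrightarrow> k \<le> depth r par v \<Longrightarrow> (par ^^ k) v \<in> V"
proof (induction k)
  case 0 then show ?case by simp
next
  case (Suc k)
  then have "(par ^^ k) v \<in> V" "(par ^^ k) v \<noteq> r" using depth_min by auto
  then show ?case using parV by simp
qed

lemma walk_exists: assumes "u \<in> V" "v \<in> V" shows "\<exists>k. Wk V r par u v k"
proof -
  have up: "\<exists>xs. is_walk V r par xs \<and> hd xs = w \<and> last xs = r" if "w \<in> V" for w
  proof -
    have "\<forall>w. w \<in> V \<longrightarrow> (par ^^ n) w = r \<longrightarrow> (\<exists>xs. is_walk V r par xs \<and> hd xs = w \<and> last xs = r)" for n
    proof (induction n)
      case 0 then show ?case by (auto intro!: exI[of _ "[r]"])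
    next
      case (Suc n)
      show ?case
      proof (intro allI impI)
        fix w assume w: "w \<in> V" "(par ^^ Suc n) w = r"
        show "\<exists>xs. is_walk V r par xs \<and> hd xs = w \<and> last xs = r"
        proof (cases "w = r")
          case True then show ?thesis using w by (auto intro!: exI[of _ "[r]"])
        next
          case False
          then have pw: "par w \<in> V" using parV w by simp
          have "(par ^^ n) (par w) = r" using w by (simp add: funpow_Suc_right del: funpow.simps)
          then obtain xs where xs: "is_walk V r par xs" "hd xs = par w" "last xs = r" using Suc pw by blast
          then obtain ys where ys: "xs = par w # ys" using walk_nonempty[OF xs(1)] by (cases xs) auto
          have "is_walk V r par (w # xs)" using xs ys w False pw by (simp add: walk_Cons2 tree_edge_def)
          then show ?thesis using xs ys by (intro exI[of _ "w # xs"]) auto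
        qed
      qed
    qed
    then show ?thesis using reach[OF that] that by blast
  qed
  obtain xs where xs: "is_walk V r par xs" "hd xs = u" "last xs = r" using up assms by blast
  obtain ys where ys: "is_walk V r par ys" "hd ys = v" "last ys = r" using up assms by blast
  have w: "is_walk V r par (xs @ tl (rev ys))"
    by (rule walk_append[OF xs(1) walk_rev[OF ys(1)]]) (simp add: xs ys hd_rev)
  have "xs \<noteq> []" "ys \<noteq> []" using walk_nonempty[OF xs(1)] walk_nonempty[OF ys(1)] by auto
  have l: "last (xs @ tl (rev ys)) = v"
  proof (cases "tl (rev ys) = []")
    case True
    obtain a where "rev ys = [a]" using \<open>ys \<noteq> []\<close> True by (cases "rev ys") auto
    then have "ys = [a]" by (metis rev_singleton_conv)
    then show ?thesis using xs ys True by simp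
  next
    case False then show ?thesis using ys by (simp add: last_tl last_rev)
  qed
  have "hd (xs @ tl (rev ys)) = u" using xs \<open>xs \<noteq> []\<close> by simp
  note this l
  then show ?thesis using w unfolding Wk_def
    by (intro exI[of _ "length (xs @ tl (rev ys)) - 1"] exI[of _ "xs @ tl (rev ys)"]) (auto simp: \<open>xs \<noteq> []\<close>)
qed

lemma key: assumes x: "x \<in> V" "x \<noteq> r" and y: "y \<in> V" and nb: "\<not> below V r par x y"
  shows "tdist V r par x y = Suc (tdist V r par (par x) y)"
proof -
  have px: "par x \<in> V" using parV x by simp
  define d where "d = tdist V r par (par x) y"
  define t where "t = tdist V r par x y"
  have Wd: "Wk V r par (par x) y d" unfolding d_def tdist_Wk using walk_exists[OF px y] by (metis LeastI_ex)
  have Wt: "Wk V r par x y t" unfolding t_def tdist_Wk using walk_exists[OF x(1) y] by (metis LeastI_ex)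
  have le1: "t \<le> Suc d"
  proof -
    obtain ys where ys: "is_walk V r par ys" "hd ys = par x" "last ys = y" "length ys = Suc d"
      using Wd unfolding Wk_def by blast
    then obtain zs where zs: "ys = par x # zs" using walk_nonempty[OF ys(1)] by (cases ys) auto
    have "is_walk V r par (x # ys)" using ys zs x px by (simp add: walk_Cons2 tree_edge_def)
    then have "Wk V r par x y (Suc d)" unfolding Wk_def using ys zs
      by (intro exI[of _ "x # ys"]) auto
    then show ?thesis unfolding t_def tdist_Wk by (rule Least_le)
  qed
  have le2: "Suc d \<le> t"
  proof -
    obtain xs where xs: "is_walk V r par xs" "hd xs = x" "last xs = y" "length xs = Suc t"
      using Wt unfolding Wk_def by blast
    have ne: "xs \<noteq> []" using xs by auto
    have ex: "\<exists>k. k < length xs \<and> \<not> below V r par x (xs ! k)"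
      using xs nb ne by (intro exI[of _ "length xs - 1"]) (auto simp: last_conv_nth)
    define k where "k = (LEAST k. k < length xs \<and> \<not> below V r par x (xs ! k))"
    have k: "k < length xs" "\<not> below V r par x (xs ! k)" using LeastI_ex[OF ex] unfolding k_def by auto
    have kmin: "\<And>j. j < k \<Longrightarrow> below V r par x (xs ! j)"
      using not_less_Least k(1) unfolding k_def by (metis order.strict_trans)
    have "xs ! 0 = x" using xs ne by (simp add: hd_conv_nth)
    then have k0: "k \<noteq> 0" using k below.brefl[where V=V and r=r and par=par, OF x(1)] by (cases "k = 0") auto
    then obtain j where j: "k = Suc j" by (cases k) auto
    have bj: "below V r par x (xs ! j)" using kmin j by simp
    have SV: "set xs \<subseteq> V" using xs unfolding is_walk_def by blast
    have e: "tree_edge V r par (xs ! j) (xs ! k)" using xs k j unfolding is_walk_def by blast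
    have kV: "xs ! k \<in> V" using SV k nth_mem by blast
    have xk: "xs ! k = par x"
    proof -
      { assume a: "xs ! j \<noteq> r" "par (xs ! j) = xs ! k"
        have "xs ! j = x"
        proof (rule ccontr)
          assume "xs ! j \<noteq> x"
          moreover from bj have "xs ! j = x \<or> below V r par x (par (xs ! j))" by (cases rule: below.cases) auto
          ultimately have "below V r par x (par (xs ! j))" by simp
          then show False using a k by simp
        qed
        then have ?thesis using a by simp }
      moreover
      { assume a: "xs ! k \<noteq> r" "par (xs ! k) = xs ! j"
        then have "below V r par x (xs ! k)" using bstep[of V r par x "xs ! k"] bj kV by simp
        then have ?thesis using k by simp }
      ultimately show ?thesis using e unfolding tree_edge_def by blast
    qed
    have dw: "is_walk V r par (drop k xs)"
      unfolding is_walk_def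
    proof (intro conjI allI impI)
      show "drop k xs \<noteq> []" using k by simp
      show "set (drop k xs) \<subseteq> V" using SV set_drop_subset[of k xs] by (rule_tac order.trans) 
      fix i assume i: "Suc i < length (drop k xs)"
      have H: "\<And>i. Suc i < length xs \<Longrightarrow> tree_edge V r par (xs ! i) (xs ! Suc i)"
        using xs(1) unfolding is_walk_def by blast
      have "Suc (k + i) < length xs" using i by simp
      from H[OF this] show "tree_edge V r par (drop k xs ! i) (drop k xs ! Suc i)"
        using k by simp
    qed
    have "Wk V r par (par x) y (t - k)" unfolding Wk_def
      using dw xk xs k by (intro exI[of _ "drop k xs"]) (auto simp: hd_drop_conv_nth)
    then have "d \<le> t - k" unfolding d_def tdist_Wk by (rule Least_le)
    then show ?thesis using k0 k xs by linarith
  qed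
  show ?thesis using le1 le2 unfolding t_def d_def by simp
qed

end


context rt begin

lemma funpow_inj: assumes v: "v \<in> V" and ab: "a < b" "b \<le> depth r par v"
  and eq: "(par ^^ a) v = (par ^^ b) v" shows False
proof -
  let ?n = "depth r par v"
  have "(par ^^ (?n - b + a)) v = (par ^^ (?n - b)) ((par ^^ a) v)" by (simp add: funpow_add)
  also have "\<dots> = (par ^^ (?n - b)) ((par ^^ b) v)" using eq by simp
  also have "\<dots> = (par ^^ (?n - b + b)) v" by (simp add: funpow_add)
  also have "?n - b + b = ?n" using ab by simp
  finally have "(par ^^ (?n - b + a)) v = r" using depth_reach[OF v] by simp
  moreover have "?n - b + a < ?n" using ab by simp
  ultimately show False using depth_min by blast
qed

lemma chain_path: assumes v: "v \<in> V"
  shows "\<exists>xs. down_path V r par xs \<and> hd xs = r \<and> last xs = v \<and> (\<forall>u. below V r par u v \<longrightarrow> u \<in> set xs)"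
proof -
  define n where "n = depth r par v"
  define xs where "xs = map (\<lambda>k. (par ^^ (n - k)) v) [0..<Suc n]"
  have len: "length xs = Suc n" unfolding xs_def by simp
  have nth: "\<And>k. k < Suc n \<Longrightarrow> xs ! k = (par ^^ (n - k)) v" unfolding xs_def
    by (simp del: upt_Suc)
  have dp: "down_path V r par xs" unfolding down_path_def
  proof (intro conjI allI impI)
    show "xs \<noteq> []" using len by auto
    show "set xs \<subseteq> V"
    proof
      fix z assume "z \<in> set xs"
      then obtain k where k: "k < Suc n" "z = xs ! k" using len by (metis in_set_conv_nth)
      then show "z \<in> V" using nth funpow_V[OF v, of "n - k"] unfolding n_def by simp
    qed
    show "distinct xs"
    proof (subst distinct_conv_nth, intro allI impI)
      fix i j assume ij: "i < length xs" "j < length xs" "i \<noteq> j"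
      show "xs ! i \<noteq> xs ! j"
      proof
        assume e: "xs ! i = xs ! j"
        show False
        proof (cases "i < j")
          case True
          then have lt: "n - j < n - i" using ij len by linarith
          have "(par ^^ (n - j)) v = (par ^^ (n - i)) v" using e nth ij len by simp
          then show False using funpow_inj[OF v lt] unfolding n_def by simp
        next
          case False
          then have "j < i" using ij by simp
          then have lt: "n - i < n - j" using ij len by linarith
          have "(par ^^ (n - i)) v = (par ^^ (n - j)) v" using e nth ij len by simp
          then show False using funpow_inj[OF v lt] unfolding n_def by simp
        qed
      qed
    qed
    fix i assume i: "Suc i < length xs"
    have "xs ! Suc i = (par ^^ (n - Suc i)) v" using nth i len by simp
    moreover have "n - Suc i < depth r par v" using i len unfolding n_def by simp
    ultimately show "xs ! Suc i \<noteq> r" using depth_min by simp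
    have "Suc (n - Suc i) = n - i" using i len by simp
    then have "par ((par ^^ (n - Suc i)) v) = (par ^^ (n - i)) v" by (metis funpow.simps(2) o_apply)
    then show "par (xs ! Suc i) = xs ! i" using nth i len by simp
  qed
  have xne: "xs \<noteq> []" using len by auto
  have "hd xs = r" using nth[of 0] len depth_reach[OF v] hd_conv_nth[OF xne] unfolding n_def by simp
  moreover have "last xs = v" using nth[of n] len last_conv_nth[OF xne] by simp
  moreover have "\<forall>u. below V r par u v \<longrightarrow> u \<in> set xs"
  proof (intro allI impI)
    fix u assume "below V r par u v"
    then obtain m where m: "(par ^^ m) v = u" "\<forall>k<m. (par ^^ k) v \<noteq> r" using below_chain by blast
    have "m \<le> n"
    proof (rule ccontr)
      assume "\<not> m \<le> n" then have "n < m" by simp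
      then show False using m depth_reach[OF v] unfolding n_def by auto
    qed
    then have "xs ! (n - m) = u" using nth[of "n - m"] m by simp
    moreover have "n - m < length xs" using len by simp
    ultimately show "u \<in> set xs" by (metis nth_mem)
  qed
  ultimately show ?thesis using dp by blast
qed

lemma root_leaf_exists: assumes v: "v \<in> V" and b: "below V r par u v"
  shows "\<exists>\<rho>. root_leaf_path V r par \<rho> \<and> u \<in> set \<rho> \<and> v \<in> set \<rho>"
proof -
  obtain xs where xs: "down_path V r par xs" "hd xs = r" "last xs = v" "\<forall>u. below V r par u v \<longrightarrow> u \<in> set xs"
    using chain_path[OF v] by blast
  have xne: "xs \<noteq> []" using xs unfolding down_path_def by blast
  define P where "P ys \<longleftrightarrow> down_path V r par ys \<and> (\<exists>zs. ys = xs @ zs)" for ys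
  have Pxs: "P xs" unfolding P_def using xs by auto
  have bnd: "\<forall>ys. P ys \<longrightarrow> length ys < Suc (card V)"
  proof (intro allI impI)
    fix ys assume "P ys"
    then have "distinct ys" "set ys \<subseteq> V" unfolding P_def down_path_def by auto
    then have "length ys \<le> card V" using card_mono[OF finV] distinct_card by metis
    then show "length ys < Suc (card V)" by simp
  qed
  obtain ys where ys: "P ys" and ymax: "\<forall>zs. P zs \<longrightarrow> length zs \<le> length ys"
    using ex_has_greatest_nat[OF Pxs bnd] by blast
  have ydp: "down_path V r par ys" and yne: "ys \<noteq> []" and yd: "distinct ys" and yV: "set ys \<subseteq> V"
    and ych: "\<And>i. Suc i < length ys \<Longrightarrow> ys ! Suc i \<noteq> r \<and> par (ys ! Suc i) = ys ! i"
    using ys unfolding P_def down_path_def by auto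
  obtain zs where yz: "ys = xs @ zs" using ys unfolding P_def by blast
  have hy: "hd ys = r" using yz xne xs by simp
  have leaf: "is_leaf V r par (last ys)"
    unfolding is_leaf_def
  proof (intro conjI notI)
    show "last ys \<in> V" using yV yne by auto
    assume "\<exists>w\<in>V. w \<noteq> r \<and> par w = last ys"
    then obtain w where w: "w \<in> V" "w \<noteq> r" "par w = last ys" by blast
    have wn: "w \<notin> set ys"
    proof
      assume "w \<in> set ys"
      then obtain i where i: "i < length ys" "ys ! i = w" by (metis in_set_conv_nth)
      show False
      proof (cases i)
        case 0 then show False using i hy yne w by (simp add: hd_conv_nth)
      next
        case (Suc j)
        then have "ys ! j = last ys" using ych[of j] i w by simp
        also have "\<dots> = ys ! (length ys - 1)" using yne by (simp add: last_conv_nth)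
        finally have "j = length ys - 1" using yd i Suc nth_eq_iff_index_eq[OF yd] by simp
        then show False using i Suc by simp
      qed
    qed
    have "down_path V r par (ys @ [w])" unfolding down_path_def
    proof (intro conjI allI impI)
      show "ys @ [w] \<noteq> []" by simp
      show "set (ys @ [w]) \<subseteq> V" using yV w by simp
      show "distinct (ys @ [w])" using yd wn by simp
      fix i assume i: "Suc i < length (ys @ [w])"
      have "(ys @ [w]) ! Suc i \<noteq> r \<and> par ((ys @ [w]) ! Suc i) = (ys @ [w]) ! i"
      proof (cases "Suc i < length ys")
        case True then show ?thesis using ych[OF True] by (simp add: nth_append)
      next
        case False
        then have li: "i = length ys - 1" "Suc i = length ys" using i by simp_all
        then show ?thesis using w yne by (simp add: nth_append last_conv_nth)
      qed
      then show "(ys @ [w]) ! Suc i \<noteq> r" "par ((ys @ [w]) ! Suc i) = (ys @ [w]) ! i" by simp_all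
    qed
    then have "P (ys @ [w])" unfolding P_def using yz by simp
    then show False using ymax by fastforce
  qed
  have "root_leaf_path V r par ys" unfolding root_leaf_path_def using ydp hy leaf by simp
  moreover have "u \<in> set ys" "v \<in> set ys" using xs b yz last_in_set[OF xne] by auto
  ultimately show ?thesis by blast
qed

lemma indep_not_below: assumes "independent V r par p q" "u \<in> set p" "v \<in> set q"
  shows "\<not> below V r par u v"
proof
  assume b: "below V r par u v"
  then have "v \<in> V" using below_V by blast
  then obtain \<rho> where "root_leaf_path V r par \<rho>" "u \<in> set \<rho>" "v \<in> set \<rho>"
    using root_leaf_exists b by blast
  then show False using assms unfolding independent_def by blast
qed

lemma dp_depth: assumes "down_path V r par p" shows "k < length p \<Longrightarrow> depth r par (p ! k) = depth r par (hd p) + k"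
proof (induction k)
  case 0 then show ?case using assms unfolding down_path_def by (simp add: hd_conv_nth)
next
  case (Suc k)
  have a: "p ! Suc k \<noteq> r" "par (p ! Suc k) = p ! k" using assms Suc.prems unfolding down_path_def by blast+
  have "p ! Suc k \<in> V" using assms Suc.prems unfolding down_path_def by (meson nth_mem subsetD)
  then show ?case using depth_par[of "p ! Suc k"] a Suc by simp
qed

lemma dp_V: "down_path V r par p \<Longrightarrow> i < length p \<Longrightarrow> p ! i \<in> V"
  unfolding down_path_def by (meson nth_mem subsetD)

lemma dp_within: assumes dp: "down_path V r par p" and ij: "i \<le> j" "j < length p"
  shows "tdist V r par (p ! j) (p ! i) = j - i"
  using ij
proof (induction j)
  case 0 then show ?case using tdist_refl[OF dp_V[OF dp, of 0]] by simp
next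
  case (Suc j)
  show ?case
  proof (cases "i = Suc j")
    case True then show ?thesis using tdist_refl[OF dp_V[OF dp Suc.prems(2)]] by simp
  next
    case False
    then have ij': "i \<le> j" using Suc.prems by simp
    have a: "p ! Suc j \<noteq> r" "par (p ! Suc j) = p ! j" using dp Suc.prems unfolding down_path_def by blast+
    have nb: "\<not> below V r par (p ! Suc j) (p ! i)"
    proof
      assume "below V r par (p ! Suc j) (p ! i)"
      then have "p ! i = p ! Suc j \<or> depth r par (p ! Suc j) < depth r par (p ! i)" by (rule below_depth)
      then show False using dp_depth[OF dp, of i] dp_depth[OF dp, of "Suc j"] Suc.prems ij' by auto
    qed
    have "tdist V r par (p ! Suc j) (p ! i) = Suc (tdist V r par (p ! j) (p ! i))"
      using key[OF dp_V[OF dp Suc.prems(2)] a(1) dp_V[OF dp] nb] a(2) Suc.prems by simp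
    then show ?thesis using Suc.IH ij' Suc.prems by simp
  qed
qed

lemma dp_within2: assumes dp: "down_path V r par p" and ij: "i < length p" "j < length p"
  shows "tdist V r par (p ! i) (p ! j) = (if i \<le> j then j - i else i - j)"
  using dp_within[OF dp, of i j] dp_within[OF dp, of j i] ij tdist_sym[of V r par "p ! i" "p ! j"] by auto

lemma dp_out: assumes dp: "down_path V r par p" and y: "y \<in> V" and nb: "\<forall>z\<in>set p. \<not> below V r par z y"
  shows "i < length p \<Longrightarrow> tdist V r par (p ! i) y = i + tdist V r par (hd p) y"
proof (induction i)
  case 0 then show ?case using dp unfolding down_path_def by (simp add: hd_conv_nth)
next
  case (Suc i)
  have a: "p ! Suc i \<noteq> r" "par (p ! Suc i) = p ! i" using dp Suc.prems unfolding down_path_def by blast+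
  have "\<not> below V r par (p ! Suc i) y" using nb Suc.prems by (meson nth_mem)
  then have "tdist V r par (p ! Suc i) y = Suc (tdist V r par (p ! i) y)"
    using key[OF dp_V[OF dp Suc.prems] a(1) y] a(2) by simp
  then show ?case using Suc by simp
qed

end


lemma pair_dist_eq: assumes "u \<noteq> v" shows "pair_dist V r par {u, v} = tdist V r par u v"
  unfolding pair_dist_def
proof (rule the_equality)
  show "\<exists>u' v'. {u, v} = {u', v'} \<and> u' \<noteq> v' \<and> tdist V r par u v = tdist V r par u' v'"
    using assms by blast
  fix d assume "\<exists>u' v'. {u, v} = {u', v'} \<and> u' \<noteq> v' \<and> d = tdist V r par u' v'"
  then obtain u' v' where "{u, v} = {u', v'}" "d = tdist V r par u' v'" by blast
  then show "d = tdist V r par u v" using tdist_sym[of V r par u v] by (auto simp: doubleton_eq_iff)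
qed

theorem mainTheorem3:
  fixes V :: "'a set" and r :: 'a and par :: "'a \<Rightarrow> 'a"
    and V1 V2 :: "'a set" and P1 P2 :: "'a list set" and f :: "'a list \<Rightarrow> 'a list"
  assumes "rooted_tree V r par"
    and "V1 \<subseteq> V" and "V2 \<subseteq> V" and "V1 \<inter> V2 = {}" and "card V1 = card V2"
    and "induces_paths V r par V1 P1" and "induces_paths V r par V2 P2"
    and "bij_betw f P1 P2"
    and "\<forall>p\<in>P1. length (f p) = length p \<and> siblings V r par (hd p) (hd (f p))"
    and "\<forall>p\<in>P1 \<union> P2. \<forall>q\<in>P1 \<union> P2. p \<noteq> q \<longrightarrow> independent V r par p q"
  shows "homometric V r par V1 V2"
proof -
  interpret rt V r par by unfold_locales (rule assms(1))
  have I1: "(\<forall>p\<in>P1. down_path V r par p) \<and> \<Union>(set ` P1) = V1 \<and>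
     (\<forall>p\<in>P1. \<forall>q\<in>P1. p \<noteq> q \<longrightarrow> set p \<inter> set q = {})"
    using assms(6) unfolding induces_paths_def by (elim conjE) (intro conjI)
  have dp1: "\<And>p. p \<in> P1 \<Longrightarrow> down_path V r par p" using I1 by simp
  have U1: "\<Union>(set ` P1) = V1" using I1 by simp
  have dj1: "\<And>p q. p \<in> P1 \<Longrightarrow> q \<in> P1 \<Longrightarrow> p \<noteq> q \<Longrightarrow> set p \<inter> set q = {}" using I1 by simp
  have I2: "(\<forall>p\<in>P2. down_path V r par p) \<and> \<Union>(set ` P2) = V2 \<and>
     (\<forall>p\<in>P2. \<forall>q\<in>P2. p \<noteq> q \<longrightarrow> set p \<inter> set q = {})"
    using assms(7) unfolding induces_paths_def by (elim conjE) (intro conjI)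
  have dp2: "\<And>p. p \<in> P2 \<Longrightarrow> down_path V r par p" using I2 by simp
  have U2: "\<Union>(set ` P2) = V2" using I2 by simp
  have dj2: "\<And>p q. p \<in> P2 \<Longrightarrow> q \<in> P2 \<Longrightarrow> p \<noteq> q \<Longrightarrow> set p \<inter> set q = {}" using I2 by simp
  have dp: "\<And>p. p \<in> P1 \<union> P2 \<Longrightarrow> down_path V r par p" using dp1 dp2 by blast
  have fP: "\<And>p. p \<in> P1 \<Longrightarrow> f p \<in> P2" using bij_betw_apply[OF assms(8)] by simp
  have finj: "inj_on f P1" and fim: "f ` P1 = P2" using assms(8) unfolding bij_betw_def by blast+
  have flen: "\<And>p. p \<in> P1 \<Longrightarrow> length (f p) = length p" using assms(9) by blast
  have sib: "\<And>p. p \<in> P1 \<Longrightarrow> hd p \<noteq> r \<and> hd (f p) \<noteq> r \<and> par (hd (f p)) = par (hd p)"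
    using assms(9) unfolding siblings_def by auto
  have NB: "\<And>p q u v. p \<in> P1 \<union> P2 \<Longrightarrow> q \<in> P1 \<union> P2 \<Longrightarrow> p \<noteq> q \<Longrightarrow> u \<in> set p \<Longrightarrow> v \<in> set q
      \<Longrightarrow> \<not> below V r par u v"
    using assms(10) indep_not_below by blast
  have hdV: "\<And>p. p \<in> P1 \<union> P2 \<Longrightarrow> hd p \<in> set p \<and> hd p \<in> V"
  proof -
    fix p assume p: "p \<in> P1 \<union> P2"
    then have "p \<noteq> []" "set p \<subseteq> V" using dp unfolding down_path_def by blast+
    then show "hd p \<in> set p \<and> hd p \<in> V" by auto
  qed
  have cross: "\<And>p q i j. p \<in> P1 \<union> P2 \<Longrightarrow> q \<in> P1 \<union> P2 \<Longrightarrow> p \<noteq> q \<Longrightarrow> i < length p \<Longrightarrow> j < length q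
     \<Longrightarrow> tdist V r par (p ! i) (q ! j) = i + j + tdist V r par (hd p) (hd q)"
  proof -
    fix p q i j assume p: "p \<in> P1 \<union> P2" and q: "q \<in> P1 \<union> P2" and pq: "p \<noteq> q"
      and i: "i < length p" and j: "j < length q"
    have yq: "q ! j \<in> set q" using j by simp
    have "tdist V r par (p ! i) (q ! j) = i + tdist V r par (hd p) (q ! j)"
      by (rule dp_out[OF dp[OF p] dp_V[OF dp[OF q] j] _ i]) (use NB[OF p q pq _ yq] in blast)
    also have "tdist V r par (hd p) (q ! j) = tdist V r par (q ! j) (hd p)" by (rule tdist_sym)
    also have "\<dots> = j + tdist V r par (hd q) (hd p)"
      by (rule dp_out[OF dp[OF q] conjunct2[OF hdV[OF p]] _ j])
         (use NB[OF q p pq[symmetric] _ conjunct1[OF hdV[OF p]]] in blast)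
    also have "tdist V r par (hd q) (hd p) = tdist V r par (hd p) (hd q)" by (rule tdist_sym)
    finally show "tdist V r par (p ! i) (q ! j) = i + j + tdist V r par (hd p) (hd q)" by simp
  qed
  have heads: "\<And>p q. p \<in> P1 \<union> P2 \<Longrightarrow> q \<in> P1 \<union> P2 \<Longrightarrow> p \<noteq> q \<Longrightarrow> hd p \<noteq> r \<Longrightarrow> hd q \<noteq> r
     \<Longrightarrow> tdist V r par (hd p) (hd q) = Suc (Suc (tdist V r par (par (hd q)) (par (hd p))))"
  proof -
    fix p q assume p: "p \<in> P1 \<union> P2" and q: "q \<in> P1 \<union> P2" and pq: "p \<noteq> q"
      and hp: "hd p \<noteq> r" and hq: "hd q \<noteq> r"
    have pV: "hd p \<in> V" "hd p \<in> set p" and qV: "hd q \<in> V" "hd q \<in> set q" using hdV p q by auto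
    have ppV: "par (hd p) \<in> V" using parV pV hp by simp
    have nb1: "\<not> below V r par (hd p) (hd q)" using NB[OF p q pq pV(2) qV(2)] .
    have nb2: "\<not> below V r par (hd q) (par (hd p))"
    proof
      assume "below V r par (hd q) (par (hd p))"
      then have "below V r par (hd q) (hd p)" by (rule below.bstep[where V=V and r=r and par=par, OF _ hp pV(1)])
      then show False using NB[OF q p pq[symmetric] qV(2) pV(2)] by simp
    qed
    have "tdist V r par (hd p) (hd q) = Suc (tdist V r par (par (hd p)) (hd q))"
      by (rule key[OF pV(1) hp qV(1) nb1])
    also have "tdist V r par (par (hd p)) (hd q) = tdist V r par (hd q) (par (hd p))" by (rule tdist_sym)
    also have "\<dots> = Suc (tdist V r par (par (hd q)) (par (hd p)))"
      by (rule key[OF qV(1) hq ppV nb2])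
    finally show "tdist V r par (hd p) (hd q) = Suc (Suc (tdist V r par (par (hd q)) (par (hd p))))" .
  qed
  define g where "g v = (SOME w. \<exists>p\<in>P1. \<exists>i<length p. v = p ! i \<and> w = f p ! i)" for v
  have uniq: "\<And>p i p' i'. p \<in> P1 \<Longrightarrow> i < length p \<Longrightarrow> p' \<in> P1 \<Longrightarrow> i' < length p' \<Longrightarrow> p ! i = p' ! i'
      \<Longrightarrow> p' = p \<and> i' = i"
  proof -
    fix p i p' i' assume p: "p \<in> P1" "i < length p" and p': "p' \<in> P1" "i' < length p'" and e: "p ! i = p' ! i'"
    have "p' = p"
    proof (rule ccontr)
      assume "p' \<noteq> p"
      then have "set p \<inter> set p' = {}" using dj1[OF p(1) p'(1)] by auto
      moreover have "p ! i \<in> set p" "p' ! i' \<in> set p'" using p p' by simp_all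
      ultimately show False using e by auto
    qed
    moreover have "distinct p" using dp1[OF p(1)] unfolding down_path_def by simp
    ultimately show "p' = p \<and> i' = i" using e p p' nth_eq_iff_index_eq by metis
  qed
  have g_eq: "\<And>p i. p \<in> P1 \<Longrightarrow> i < length p \<Longrightarrow> g (p ! i) = f p ! i"
  proof -
    fix p i assume p: "p \<in> P1" "i < length p"
    show "g (p ! i) = f p ! i" unfolding g_def
    proof (rule someI2[where a = "f p ! i"])
      show "\<exists>p'\<in>P1. \<exists>i'<length p'. p ! i = p' ! i' \<and> f p ! i = f p' ! i'" using p by blast
      fix w assume "\<exists>p'\<in>P1. \<exists>i'<length p'. p ! i = p' ! i' \<and> w = f p' ! i'"
      then obtain p' i' where "p' \<in> P1" "i' < length p'" "p ! i = p' ! i'" "w = f p' ! i'" by blast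
      then show "w = f p ! i" using uniq[OF p] by metis
    qed
  qed
  have memV1: "\<And>v. v \<in> V1 \<Longrightarrow> \<exists>p\<in>P1. \<exists>i<length p. v = p ! i"
  proof -
    fix v assume "v \<in> V1"
    then obtain p where p: "p \<in> P1" "v \<in> set p" using U1 by auto
    then obtain i where "i < length p" "v = p ! i" by (metis in_set_conv_nth)
    then show "\<exists>p\<in>P1. \<exists>i<length p. v = p ! i" using p by blast
  qed
  have dist: "\<And>u v. u \<in> V1 \<Longrightarrow> v \<in> V1 \<Longrightarrow> tdist V r par (g u) (g v) = tdist V r par u v"
  proof -
    fix u v assume u: "u \<in> V1" and v: "v \<in> V1"
    obtain p i where p: "p \<in> P1" "i < length p" "u = p ! i" using memV1[OF u] by blast
    obtain q j where q: "q \<in> P1" "j < length q" "v = q ! j" using memV1[OF v] by blast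
    have gu: "g u = f p ! i" and gv: "g v = f q ! j" using g_eq p q by auto
    show "tdist V r par (g u) (g v) = tdist V r par u v"
    proof (cases "p = q")
      case True
      have "tdist V r par (f p ! i) (f p ! j) = (if i \<le> j then j - i else i - j)"
        using dp_within2[OF dp2[OF fP[OF p(1)]]] flen[OF p(1)] p q True by simp
      moreover have "tdist V r par (p ! i) (p ! j) = (if i \<le> j then j - i else i - j)"
        using dp_within2[OF dp1[OF p(1)]] p q True by simp
      ultimately show ?thesis using gu gv p q True by simp
    next
      case False
      have fpq: "f p \<noteq> f q" using False finj p q inj_onD by metis
      have fpP: "f p \<in> P1 \<union> P2" "f q \<in> P1 \<union> P2" using fP p q by auto
      have "tdist V r par (f p ! i) (f q ! j) = i + j + tdist V r par (hd (f p)) (hd (f q))"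
        using cross[OF fpP fpq] flen p q by simp
      also have "tdist V r par (hd (f p)) (hd (f q)) = Suc (Suc (tdist V r par (par (hd (f q))) (par (hd (f p)))))"
        using heads[OF fpP fpq] sib p q by simp
      also have "\<dots> = Suc (Suc (tdist V r par (par (hd q)) (par (hd p))))" using sib p q by simp
      also have "\<dots> = tdist V r par (hd p) (hd q)" using heads[of p q] False sib p q by simp
      also have "i + j + \<dots> = tdist V r par (p ! i) (q ! j)" using cross[of p q i j] False p q by simp
      finally show ?thesis using gu gv p q by simp
    qed
  qed
  have ginj: "inj_on g V1"
  proof (rule inj_onI)
    fix u v assume u: "u \<in> V1" and v: "v \<in> V1" and e: "g u = g v"
    obtain p i where p: "p \<in> P1" "i < length p" "u = p ! i" using memV1[OF u] by blast
    obtain q j where q: "q \<in> P1" "j < length q" "v = q ! j" using memV1[OF v] by blast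
    have e2: "f p ! i = f q ! j" using e g_eq p q by simp
    have "f p = f q"
    proof (rule ccontr)
      assume "f p \<noteq> f q"
      then have "set (f p) \<inter> set (f q) = {}" using dj2[OF fP[OF p(1)] fP[OF q(1)]] by auto
      moreover have "f p ! i \<in> set (f p)" "f q ! j \<in> set (f q)" using p q flen by simp_all
      ultimately show False using e2 by auto
    qed
    then have pq: "p = q" using finj p q inj_onD by metis
    have "distinct (f p)" using dp2[OF fP[OF p(1)]] unfolding down_path_def by simp
    then have "i = j" using e2 pq p q flen nth_eq_iff_index_eq by metis
    then show "u = v" using p q pq by simp
  qed
  have gim: "g ` V1 = V2"
  proof
    show "g ` V1 \<subseteq> V2"
    proof
      fix w assume "w \<in> g ` V1"
      then obtain u where u: "u \<in> V1" "w = g u" by blast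
      obtain p i where p: "p \<in> P1" "i < length p" "u = p ! i" using memV1[OF u(1)] by blast
      have "w = f p ! i" using g_eq p u by simp
      then have "w \<in> set (f p)" using p flen by simp
      then show "w \<in> V2" using U2 fP[OF p(1)] by auto
    qed
    show "V2 \<subseteq> g ` V1"
    proof
      fix w assume "w \<in> V2"
      then obtain q where q: "q \<in> P2" "w \<in> set q" using U2 by auto
      then obtain p where p: "p \<in> P1" "q = f p" using fim q(1) by auto
      obtain i where i: "i < length q" "w = q ! i" using q by (metis in_set_conv_nth)
      have ip: "i < length p" using i p flen by simp
      have "g (p ! i) = w" using g_eq[OF p(1) ip] i p by simp
      moreover have "p ! i \<in> V1" using U1 p ip by (metis UN_I nth_mem)
      ultimately show "w \<in> g ` V1" by blast
    qed
  qed
  define E1 where "E1 = {e. e \<subseteq> V1 \<and> card e = 2}"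
  define E2 where "E2 = {e. e \<subseteq> V2 \<and> card e = 2}"
  have fin1: "finite V1" using assms(2) finV finite_subset by blast
  have finE1: "finite E1" unfolding E1_def using fin1 by (rule_tac finite_subset[of _ "Pow V1"]) auto
  have iE: "inj_on ((`) g) E1" using inj_on_image_Pow[OF ginj] unfolding E1_def
    by (rule inj_on_subset) auto
  have E12: "(`) g ` E1 = E2"
  proof
    show "(`) g ` E1 \<subseteq> E2"
    proof
      fix e' assume "e' \<in> (`) g ` E1"
      then obtain e where e: "e \<subseteq> V1" "card e = 2" "e' = g ` e" unfolding E1_def by blast
      have "card (g ` e) = card e" using inj_on_subset[OF ginj e(1)] by (rule card_image)
      then show "e' \<in> E2" using e gim unfolding E2_def by auto
    qed
    show "E2 \<subseteq> (`) g ` E1"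
    proof
      fix e assume e: "e \<in> E2"
      define e' where "e' = V1 \<inter> g -` e"
      have ge: "g ` e' = e" using e gim unfolding e'_def E2_def by auto
      have "e' \<subseteq> V1" unfolding e'_def by blast
      moreover have "card e' = card e" using ge card_image[OF inj_on_subset[OF ginj \<open>e' \<subseteq> V1\<close>]] by simp
      ultimately have "e' \<in> E1" using e unfolding E1_def E2_def by simp
      then show "e \<in> (`) g ` E1" using ge by blast
    qed
  qed
  have pdg: "\<And>e. e \<in> E1 \<Longrightarrow> pair_dist V r par (g ` e) = pair_dist V r par e"
  proof -
    fix e assume "e \<in> E1"
    then obtain a b where ab: "e = {a, b}" "a \<noteq> b" "a \<in> V1" "b \<in> V1" unfolding E1_def
      by (auto simp: card_2_iff)
    have "g a \<noteq> g b" using ginj ab inj_onD by metis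
    then have "pair_dist V r par (g ` e) = tdist V r par (g a) (g b)" using ab pair_dist_eq[of "g a" "g b" V r par] by simp
    also have "\<dots> = tdist V r par a b" using dist ab by simp
    also have "\<dots> = pair_dist V r par e" using ab pair_dist_eq[OF ab(2), of V r par] by simp
    finally show "pair_dist V r par (g ` e) = pair_dist V r par e" .
  qed
  have "profile V r par V2 = image_mset (pair_dist V r par) (mset_set ((`) g ` E1))"
    unfolding profile_def E12 E2_def by simp
  also have "\<dots> = image_mset (pair_dist V r par) (image_mset ((`) g) (mset_set E1))"
    using image_mset_mset_set[OF iE] by simp
  also have "\<dots> = image_mset (\<lambda>e. pair_dist V r par (g ` e)) (mset_set E1)"
    by (simp add: multiset.map_comp comp_def)
  also have "\<dots> = image_mset (pair_dist V r par) (mset_set E1)"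
    by (rule image_mset_cong) (use pdg finE1 in auto)
  also have "\<dots> = profile V r par V1" unfolding profile_def E1_def by simp
  finally show ?thesis unfolding homometric_def using assms(4) by simp
qed


end
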